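(* Let $m\in\{2,3\}$, and let $S\ni h$ be a polarized lattice with $h^2\ge4$ if $m=2$ and $h^2=8$ if $m=3$, which is $(m-1)$-admissible. Let $\Delta$ be a Weyl chamber for $\operatorname{rt}(S,h)$, $\bar P$ the corresponding closed fundamental polyhedron, and $w\in\bar P$ an $m$-isotropic vector. Then: (1) if $h^2=4$ and $m=2$, there are at most two $2$-isotropic vectors in $\bar P$, and if there are two, $w\ne\bar w$, then $w+\bar w=h$; (2) otherwise, $w$ is the unique $m$-isotropic vector in $\bar P$. Furthermore, $l\cdot w\in\{0,1\}$ for each line $l\in\operatorname{Fn}_\Delta(S,h)$ and $e\cdot w\in\{0,1\}$ for each exceptional divisor $e\in\mathfrak{b}(\Delta)$.
   Context: All lattices even; $(S,h)$ polarized means $S$ hyperbolic, $h^2>0$. $\operatorname{root}_n(S,h)=\{r: r^2=-2,\ r\cdot h=n\}$, $\operatorname{rt}(S,h)$ spanned by $\operatorname{root}_0(S,h)$. A Weyl chamber $\Delta$ has positive roots $P_\Delta$ and simple roots $\mathfrak{b}(\Delta)$ (exceptional divisors). $\bar P=\{v\in S\otimes\mathbb{R}: v^2\ge0,\ v\cdot h\ge0,\ v\cdot r\ge0 \text{ for all } r\in P_\Delta \text{ and all roots } r \text{ with } r\cdot h>0\}$. Lines: $\operatorname{Fn}_\Delta(S,h)=\{l\in\operatorname{root}_1(S,h): l\cdot e\ge0\ \forall e\in\mathfrak{b}(\Delta)\}$. $w$ is $m$-isotropic if $w^2=0$, $w\cdot h=m$. $1$-admissible: no $1$-isotropic vector;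 $2$-admissible: $h^2\ge4$ and no $1$- or $2$-isotropic vector. *)

theory Defs
  imports "HOL-Analysis.Analysis"
begin

text \<open>A lattice of rank CARD('n) is modelled as int^'n with Gram matrix G.\<close>

definition bi :: "int^'n^'n \<Rightarrow> int^'n \<Rightarrow> int^'n \<Rightarrow> int" where
  "bi G x y = (\<Sum>i\<in>UNIV. \<Sum>j\<in>UNIV. x$i * G$i$j * y$j)"

definition br :: "int^'n^'n \<Rightarrow> real^'n \<Rightarrow> real^'n \<Rightarrow> real" where
  "br G x y = (\<Sum>i\<in>UNIV. \<Sum>j\<in>UNIV. x$i * real_of_int (G$i$j) * y$j)"

definition emb :: "int^'n \<Rightarrow> real^'n" where
  "emb x = (\<chi> i. real_of_int (x$i))"

definition even_lattice :: "int^'n^'n \<Rightarrow> bool" where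
  "even_lattice G \<longleftrightarrow> (\<forall>i j. G$i$j = G$j$i) \<and> (\<forall>i. even (G$i$i))"

text \<open>Hyperbolic: nondegenerate of signature (1, rank-1).\<close>
definition hyperbolic :: "int^'n^'n \<Rightarrow> bool" where
  "hyperbolic G \<longleftrightarrow> (\<exists>x. br G x x > 0) \<and>
     (\<forall>x y. br G x x > 0 \<and> br G x y = 0 \<and> y \<noteq> 0 \<longrightarrow> br G y y < 0)"

definition polarized :: "int^'n^'n \<Rightarrow> int^'n \<Rightarrow> bool" where
  "polarized G h \<longleftrightarrow> even_lattice G \<and> hyperbolic G \<and> bi G h h > 0"

definition root :: "int^'n^'n \<Rightarrow> int^'n \<Rightarrow> int \<Rightarrow> (int^'n) set" where
  "root G h n = {r. bi G r r = -2 \<and> bi G r h = n}"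

text \<open>Weyl chamber for rt(S,h): a connected component of the complement, in rt(S,h) tensor R,
  of the hyperplanes orthogonal to the roots in root_0(S,h).\<close>
definition weyl_chamber :: "int^'n^'n \<Rightarrow> int^'n \<Rightarrow> (real^'n) set \<Rightarrow> bool" where
  "weyl_chamber G h D \<longleftrightarrow>
     (let U = span (emb ` root G h 0) - (\<Union>r\<in>root G h 0. {x. br G x (emb r) = 0})
      in \<exists>x\<in>U. D = connected_component_set U x)"

definition pos_roots :: "int^'n^'n \<Rightarrow> int^'n \<Rightarrow> (real^'n) set \<Rightarrow> (int^'n) set" where
  "pos_roots G h D = {r\<in>root G h 0. \<forall>x\<in>D. br G x (emb r) > 0}"

definition simple_roots :: "int^'n^'n \<Rightarrow> int^'n \<Rightarrow> (real^'n) set \<Rightarrow> (int^'n) set" where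
  "simple_roots G h D = {r\<in>pos_roots G h D.
     \<not> (\<exists>a\<in>pos_roots G h D. \<exists>b\<in>pos_roots G h D. r = a + b)}"

definition Pbar :: "int^'n^'n \<Rightarrow> int^'n \<Rightarrow> (real^'n) set \<Rightarrow> (real^'n) set" where
  "Pbar G h D = {v. br G v v \<ge> 0 \<and> br G v (emb h) \<ge> 0 \<and>
     (\<forall>r\<in>pos_roots G h D. br G v (emb r) \<ge> 0) \<and>
     (\<forall>r. bi G r r = -2 \<and> bi G r h > 0 \<longrightarrow> br G v (emb r) \<ge> 0)}"

definition lines :: "int^'n^'n \<Rightarrow> int^'n \<Rightarrow> (real^'n) set \<Rightarrow> (int^'n) set" where
  "lines G h D = {l\<in>root G h 1. \<forall>e\<in>simple_roots G h D. bi G l e \<ge> 0}"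

definition isotropic :: "int^'n^'n \<Rightarrow> int^'n \<Rightarrow> int \<Rightarrow> int^'n \<Rightarrow> bool" where
  "isotropic G h m w \<longleftrightarrow> bi G w w = 0 \<and> bi G w h = m"

definition admissible :: "int^'n^'n \<Rightarrow> int^'n \<Rightarrow> int \<Rightarrow> bool" where
  "admissible G h k \<longleftrightarrow> (k \<ge> 2 \<longrightarrow> bi G h h \<ge> 4) \<and>
     (\<forall>j\<in>{1..k}. \<not> (\<exists>w. isotropic G h j w))"

end

theory Submission
  imports Defs
begin

lemma bi_add1: "bi G (x + y) z = bi G x z + bi G y z"
  by (simp add: bi_def ring_distribs sum.distrib)
lemma bi_add2: "bi G z (x + y) = bi G z x + bi G z y"
  by (simp add: bi_def ring_distribs sum.distrib)
lemma bi_diff1: "bi G (x - y) z = bi G x z - bi G y z"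
  by (simp add: bi_def ring_distribs sum_subtractf)
lemma bi_diff2: "bi G z (x - y) = bi G z x - bi G z y"
  by (simp add: bi_def ring_distribs sum_subtractf)
lemma bi_neg1: "bi G (- x) z = - bi G x z"
  by (simp add: bi_def sum_negf)
lemma bi_neg2: "bi G z (- x) = - bi G z x"
  by (simp add: bi_def sum_negf)
lemma bi_smult1: "bi G (c *s x) z = c * bi G x z"
  by (simp add: bi_def sum_distrib_left mult_ac)
lemma bi_smult2: "bi G z (c *s x) = c * bi G z x"
  by (simp add: bi_def sum_distrib_left mult_ac)

lemmas bi_lin = bi_add1 bi_add2 bi_diff1 bi_diff2 bi_neg1 bi_neg2 bi_smult1 bi_smult2

lemma bi_sym: assumes "even_lattice G" shows "bi G x y = bi G y x"
proof -
  have s: "\<And>i j. G$i$j = G$j$i" using assms by (simp add: even_lattice_def)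
  have "bi G y x = (\<Sum>j\<in>UNIV. \<Sum>i\<in>UNIV. y$i * G$i$j * x$j)"
    unfolding bi_def by (rule sum.swap)
  also have "\<dots> = bi G x y" unfolding bi_def
    by (intro sum.cong refl) (simp add: s mult_ac)
  finally show ?thesis by simp
qed

lemma br_emb: "br G (emb x) (emb y) = of_int (bi G x y)"
  by (simp add: br_def bi_def emb_def)

lemma emb_eq0: "emb x = 0 \<longleftrightarrow> x = 0"
  by (simp add: emb_def vec_eq_iff)

lemma emb_neg: "emb (- x) = - emb x"
  by (simp add: emb_def vec_eq_iff)

lemma br_neg2: "br G z (- x) = - br G z x"
  by (simp add: br_def sum_negf)

lemma hyp_int:
  assumes "hyperbolic G" "bi G x x > 0" "bi G x y = 0" "y \<noteq> 0"
  shows "bi G y y < 0"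
proof -
  have "br G (emb y) (emb y) < 0"
    using assms unfolding hyperbolic_def
    by (metis br_emb emb_eq0 of_int_0 of_int_pos)
  thus ?thesis by (simp add: br_emb)
qed

lemma hodge:
  assumes "hyperbolic G" "even_lattice G" "bi G h h > 0"
  shows "bi G h h * bi G x x < (bi G x h)^2 \<or> bi G h h *s x = bi G x h *s h"
proof (cases "bi G h h *s x = bi G x h *s h")
  case False
  define y where "y = bi G h h *s x - bi G x h *s h"
  have y0: "y \<noteq> 0" using False by (simp add: y_def)
  have "bi G h y = 0" unfolding y_def using bi_sym[OF assms(2), of h x]
    by (simp add: bi_lin)
  hence "bi G y y < 0" using hyp_int[OF assms(1) assms(3) _ y0] by simp
  moreover have "bi G y y = bi G h h * (bi G h h * bi G x x - (bi G x h)^2)"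
    unfolding y_def using bi_sym[OF assms(2), of h x]
    by (simp add: bi_lin power2_eq_square algebra_simps)
  ultimately have "bi G h h * (bi G h h * bi G x x - (bi G x h)^2) < 0" by simp
  with assms(3) have "bi G h h * bi G x x - (bi G x h)^2 < 0"
    by (simp add: mult_less_0_iff)
  thus ?thesis by simp
qed simp

lemma hodge_le:
  assumes "hyperbolic G" "even_lattice G" "bi G h h > 0"
  shows "bi G h h * bi G x x \<le> (bi G x h)^2"
  using hodge[OF assms, of x]
proof
  assume e: "bi G h h *s x = bi G x h *s h"
  have "bi G (bi G h h *s x) x = bi G (bi G x h *s h) x" by (simp add: e)
  thus ?thesis using bi_sym[OF assms(2), of h x] by (simp add: bi_lin power2_eq_square)
qed simp

lemma chamber_sign:
  assumes "weyl_chamber G h D" "r \<in> root G h 0"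
  shows "r \<in> pos_roots G h D \<or> - r \<in> pos_roots G h D"
proof -
  define U where "U = span (emb ` root G h 0) - (\<Union>r\<in>root G h 0. {x. br G x (emb r) = 0})"
  obtain x where x: "x \<in> U" and D: "D = connected_component_set U x"
    using assms(1) unfolding weyl_chamber_def U_def[symmetric] Let_def by blast
  define f where "f y = br G y (emb r)" for y
  have DU: "D \<subseteq> U" using D connected_component_subset by blast
  have nz: "\<forall>y\<in>D. f y \<noteq> 0" using DU assms(2) unfolding U_def f_def by blast
  have cD: "connected D" using D connected_connected_component by blast
  have cf: "continuous_on D f" unfolding f_def br_def
    by (intro continuous_intros)
  have cimg: "connected (f ` D)" using connected_continuous_image[OF cf cD] .
  have sgn: "(\<forall>y\<in>D. f y > 0) \<or> (\<forall>y\<in>D. f y < 0)"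
  proof (rule ccontr)
    assume "\<not> ?thesis"
    then obtain a b where a: "a \<in> D" "f a \<le> 0" and b: "b \<in> D" "f b \<ge> 0"
      by (meson not_le)
    then have "f a < 0" "f b > 0" using nz by force+
    have "{f a..f b} \<subseteq> f ` D"
      using connected_contains_Icc[OF cimg] a b by blast
    then have "0 \<in> f ` D" using \<open>f a < 0\<close> \<open>f b > 0\<close> by auto
    thus False using nz by auto
  qed
  have mr: "- r \<in> root G h 0" using assms(2) by (simp add: root_def bi_lin)
  show ?thesis
  proof (cases "\<forall>y\<in>D. f y > 0")
    case True thus ?thesis using assms(2) by (simp add: pos_roots_def f_def)
  next
    case False
    hence "\<forall>y\<in>D. f y < 0" using sgn by blast
    thus ?thesis using mr by (simp add: pos_roots_def f_def emb_neg br_neg2)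
  qed
qed


theorem lemma2p15:
  fixes G :: "int^'n^'n" and h w :: "int^'n" and D :: "(real^'n) set" and m :: int
  assumes "m \<in> {2, 3}"
    and "polarized G h"
    and "m = 2 \<Longrightarrow> bi G h h \<ge> 4"
    and "m = 3 \<Longrightarrow> bi G h h = 8"
    and "admissible G h (m - 1)"
    and "weyl_chamber G h D"
    and "isotropic G h m w" and "emb w \<in> Pbar G h D"
  shows "(if bi G h h = 4 \<and> m = 2 then
            finite {v. isotropic G h 2 v \<and> emb v \<in> Pbar G h D} \<and>
            card {v. isotropic G h 2 v \<and> emb v \<in> Pbar G h D} \<le> 2 \<and>
            (\<forall>w'. isotropic G h 2 w' \<and> emb w' \<in> Pbar G h D \<and> w' \<noteq> w \<longrightarrow> w + w' = h)
          else (\<forall>w'. isotropic G h m w' \<and> emb w' \<in> Pbar G h D \<longrightarrow> w' = w))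
       \<and> (\<forall>l\<in>lines G h D. bi G l w \<in> {0, 1})
       \<and> (\<forall>e\<in>simple_roots G h D. bi G e w \<in> {0, 1})"
proof -
  have ev: "even_lattice G" and hy: "hyperbolic G" and Hp: "bi G h h > 0"
    using assms(2) by (auto simp: polarized_def)
  note S = bi_sym[OF ev]
  note HL = hodge_le[OF hy ev Hp]
  note HD = hodge[OF hy ev Hp]
  have ww: "bi G w w = 0" and wh: "bi G w h = m" using assms(7) by (auto simp: isotropic_def)
  have PB1: "\<And>v r. emb v \<in> Pbar G h D \<Longrightarrow> r \<in> pos_roots G h D \<Longrightarrow> bi G v r \<ge> 0"
    by (simp add: Pbar_def br_emb)
  have PB2: "\<And>v r. emb v \<in> Pbar G h D \<Longrightarrow> bi G r r = -2 \<Longrightarrow> bi G r h > 0 \<Longrightarrow> bi G v r \<ge> 0"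
    by (simp add: Pbar_def br_emb)
  have adm1: "\<not> isotropic G h 1 v" for v
    using assms(1,5) by (auto simp: admissible_def)
  have adm2: "m = 3 \<Longrightarrow> \<not> isotropic G h 2 v" for v
    using assms(5) by (auto simp: admissible_def)
  have pair: "w' = w \<or> (m = 2 \<and> bi G h h = 4 \<and> w + w' = h)"
    if w1: "isotropic G h m w'" and w2: "emb w' \<in> Pbar G h D" for w'
  proof -
    have ww': "bi G w' w' = 0" and wh': "bi G w' h = m" using w1 by (auto simp: isotropic_def)
    define k where "k = bi G w w'"
    have kk: "bi G w' w = k" using S[of w' w] k_def by simp
    show ?thesis
    proof (cases "w - w' = 0")
      case True thus ?thesis by simp
    next
      case False
      have "bi G h (w - w') = 0" using S[of h w] S[of h w'] wh wh' by (simp add: bi_lin)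
      hence "bi G (w - w') (w - w') < 0" using hyp_int[OF hy Hp _ False] by simp
      hence kpos: "k > 0" using ww ww' kk k_def by (simp add: bi_lin)
      show ?thesis
      proof (cases "k = 1")
        case True
        have r: "w - w' \<in> root G h 0" using ww ww' kk k_def True wh wh'
          by (simp add: root_def bi_lin)
        from chamber_sign[OF assms(6) r] show ?thesis
        proof
          assume "w - w' \<in> pos_roots G h D"
          from PB1[OF assms(8) this] have False using ww k_def True by (simp add: bi_lin)
          thus ?thesis ..
        next
          assume "- (w - w') \<in> pos_roots G h D"
          from PB1[OF w2 this] have False using ww' kk True by (simp add: bi_lin)
          thus ?thesis ..
        qed
      next
        case False
        hence k2: "k \<ge> 2" using kpos by simp
        define x where "x = w + w'"
        have xx: "bi G x x = 2 * k" using ww ww' kk k_def by (simp add: x_def bi_lin)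
        have xh: "bi G x h = 2 * m" using wh wh' by (simp add: x_def bi_lin)
        have le: "bi G h h * (2 * k) \<le> 4 * m^2" using HL[of x] xx xh by (simp add: power2_eq_square)
        show ?thesis
        proof (cases "m = 3")
          case True
          hence H8: "bi G h h = 8" using assms(4) by simp
          hence "k = 2" using le k2 True by simp
          have "isotropic G h 2 (h - x)"
            using H8 xx xh S[of h x] True \<open>k = 2\<close> by (simp add: isotropic_def bi_lin)
          thus ?thesis using adm2[OF True] by blast
        next
          case False
          hence m2: "m = 2" using assms(1) by simp
          hence H4: "bi G h h \<ge> 4" using assms(3) by simp
          have a: "4 * k \<le> bi G h h * k" using H4 kpos by (intro mult_right_mono) auto
          have b: "bi G h h * k \<le> 8" using le m2 by (simp add: algebra_simps)
          have "k = 2" using a b k2 by linarith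
          hence "bi G h h = 4" using b H4 by simp
          have "bi G h h *s x = bi G x h *s h"
            using HD[of x] \<open>bi G h h = 4\<close> xx xh m2 \<open>k = 2\<close> by (simp add: power2_eq_square)
          hence "x = h" using \<open>bi G h h = 4\<close> xh m2 by (simp add: vec_eq_iff)
          thus ?thesis using m2 \<open>bi G h h = 4\<close> x_def by simp
        qed
      qed
    qed
  qed
  have part1: "(if bi G h h = 4 \<and> m = 2 then
            finite {v. isotropic G h 2 v \<and> emb v \<in> Pbar G h D} \<and>
            card {v. isotropic G h 2 v \<and> emb v \<in> Pbar G h D} \<le> 2 \<and>
            (\<forall>w'. isotropic G h 2 w' \<and> emb w' \<in> Pbar G h D \<and> w' \<noteq> w \<longrightarrow> w + w' = h)
          else (\<forall>w'. isotropic G h m w' \<and> emb w' \<in> Pbar G h D \<longrightarrow> w' = w))"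
  proof (cases "bi G h h = 4 \<and> m = 2")
    case True
    have sub: "{v. isotropic G h 2 v \<and> emb v \<in> Pbar G h D} \<subseteq> {w, h - w}"
    proof
      fix v assume "v \<in> {v. isotropic G h 2 v \<and> emb v \<in> Pbar G h D}"
      hence "v = w \<or> w + v = h" using pair[of v] True by auto
      thus "v \<in> {w, h - w}" by (auto simp: algebra_simps)
    qed
    have fin: "finite {v. isotropic G h 2 v \<and> emb v \<in> Pbar G h D}"
      using sub finite_subset by blast
    have "card {v. isotropic G h 2 v \<and> emb v \<in> Pbar G h D} \<le> card {w, h - w}"
      using sub by (intro card_mono) auto
    also have "\<dots> \<le> 2" by (simp add: card_insert_if)
    finally show ?thesis using True fin pair by auto
  next
    case False
    thus ?thesis using pair by auto
  qed
  have part2: "\<forall>l\<in>lines G h D. bi G l w \<in> {0, 1}"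
  proof
    fix l assume "l \<in> lines G h D"
    hence ll: "bi G l l = -2" and lh: "bi G l h = 1" by (auto simp: lines_def root_def)
    define k where "k = bi G l w"
    have kk: "bi G w l = k" using S[of w l] k_def by simp
    have k0: "k \<ge> 0" using PB2[OF assms(8) ll] lh kk by simp
    have "k \<le> 1"
    proof (rule ccontr)
      assume "\<not> k \<le> 1" hence k2: "k \<ge> 2" by simp
      define u where "u = w + l"
      have uu: "bi G u u = 2 * k - 2" using ww ll kk k_def by (simp add: u_def bi_lin)
      have uh: "bi G u h = m + 1" using wh lh by (simp add: u_def bi_lin)
      have le: "bi G h h * (2 * k - 2) \<le> (m + 1)^2" using HL[of u] uu uh by simp
      show False
      proof (cases "m = 3")
        case True
        hence H8: "bi G h h = 8" using assms(4) by simp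
        hence "k = 2" using le k2 True by (simp add: power2_eq_square)
        have "bi G h h *s u = bi G u h *s h"
          using HD[of u] H8 uu uh True \<open>k = 2\<close> by (simp add: power2_eq_square)
        hence "bi G (bi G h h *s u) w = bi G (bi G u h *s h) w" by simp
        thus False using H8 uh True ww kk \<open>k = 2\<close> S[of h w] wh k_def
          by (simp add: u_def bi_lin)
      next
        case False
        hence m2: "m = 2" using assms(1) by simp
        hence H4: "bi G h h \<ge> 4" using assms(3) by simp
        have a: "4 * (2 * k - 2) \<le> bi G h h * (2 * k - 2)" using H4 k2 by (intro mult_right_mono) auto
        have b: "bi G h h * (2 * k - 2) \<le> 9" using le m2 by (simp add: power2_eq_square)
        have c: "4 * (2 * k - 2) \<le> 9" using a b by linarith
        have "k = 2" using c k2 by presburger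
        hence "bi G h h = 4" using b H4 by simp
        have "isotropic G h 1 (h - u)"
          using \<open>bi G h h = 4\<close> uu uh S[of h u] m2 \<open>k = 2\<close> by (simp add: isotropic_def bi_lin)
        thus False using adm1 by blast
      qed
    qed
    thus "bi G l w \<in> {0, 1}" using k0 k_def by auto
  qed
  have part3: "\<forall>e\<in>simple_roots G h D. bi G e w \<in> {0, 1}"
  proof
    fix e assume "e \<in> simple_roots G h D"
    hence ep: "e \<in> pos_roots G h D" by (simp add: simple_roots_def)
    hence ee: "bi G e e = -2" and eh: "bi G e h = 0" by (auto simp: pos_roots_def root_def)
    define k where "k = bi G e w"
    have kk: "bi G w e = k" using S[of w e] k_def by simp
    have k0: "k \<ge> 0" using PB1[OF assms(8) ep] kk by simp
    have "k \<le> 1"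
    proof (rule ccontr)
      assume "\<not> k \<le> 1" hence k2: "k \<ge> 2" by simp
      define u where "u = w + e"
      have uu: "bi G u u = 2 * k - 2" using ww ee kk k_def by (simp add: u_def bi_lin)
      have uh: "bi G u h = m" using wh eh by (simp add: u_def bi_lin)
      have le: "bi G h h * (2 * k - 2) \<le> m^2" using HL[of u] uu uh by simp
      have H4: "bi G h h \<ge> 4" using assms(1,3,4) by auto
      have a: "4 * (2 * k - 2) \<le> bi G h h * (2 * k - 2)" using H4 k2 by (intro mult_right_mono) auto
      show False
      proof (cases "m = 3")
        case True
        hence H8: "bi G h h = 8" using assms(4) by simp
        thus False using le k2 True by (simp add: power2_eq_square)
      next
        case False
        hence m2: "m = 2" using assms(1) by simp
        thus False using a le k2 by (simp add: power2_eq_square)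
      qed
    qed
    thus "bi G e w \<in> {0, 1}" using k0 k_def by auto
  qed
  show ?thesis using part1 part2 part3 by blast
qed

end
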